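(* Let $g\ge 2$ and $d\ge 1$ be integers with $d>2^{g-1}$. Let $\tau_g\in\mathbb{C}$ with $\operatorname{Im}\tau_g>0$, let $\tau_{ij}=\tau_{ji}\in\mathbb{C}$ for $1\le i<j\le g-1$ be arbitrary, and let $\tau_{1g},\ldots,\tau_{g-1,g}\in\mathbb{C}$ be such that the images $a_1,\ldots,a_{g-1}$ of $\tau_{1g},\ldots,\tau_{g-1,g}$ in the elliptic curve $E=\mathbb{C}/(\mathbb{Z}d+\mathbb{Z}\tau_g)$ are linearly independent over $\mathbb{Z}$. Let $S=\{0,1\}^{g-1}$ and for $q\in S$ put $c_q=\prod_{1\le i<j\le g-1} \mathbf{e}(\tau_{ij})^{q_iq_j}$. For $k\in\mathbb{Z}/d\mathbb{Z}$ define, for $z\in\mathbb{C}$ and homogeneous coordinates $([u_1:v_1],\ldots,[u_{g-1}:v_{g-1}])\in(\mathbb{P}^1)^{g-1}$, \[ F_k(z;u,v)=\sum_{q\in S} c_q\,\vartheta_k\Big(\tau_g,\ z+\sum_{i=1}^{g-1}q_i\tau_{ig}\Big)\prod_{i=1}^{g-1}u_i^{q_i}v_i^{1-q_i}. \] Then $F_0,\ldots,F_{d-1}$ have no common zero on $\mathbb{C}\times(\mathbb{P}^1)^{g-1}$.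
   Context: $\mathbf{e}(x)=e^{2\pi i x}$. For $\tau$ in the upper half plane, $z\in\mathbb{C}$ and $k\in\mathbb{Z}/d\mathbb{Z}$, $\vartheta_k(\tau,z)=\sum_{n\in\mathbb{Z}}\mathbf{e}\big(\tfrac12(n+k/d)^2\tau+(n+k/d)z\big)$ (this depends only on the class of $k$ modulo $d$). Each $F_k$ is multihomogeneous of degree $(1,\ldots,1)$ in the $(u_i,v_i)$, so its vanishing at a point of $\mathbb{C}\times(\mathbb{P}^1)^{g-1}$ is well defined; in the affine coordinate $w_i=u_i/v_i$ it reads $\sum_{q\in S}c_q\vartheta_k(\tau_g,z+\sum_i q_i\tau_{ig})\prod_i w_i^{q_i}$. *)

theory Defs
  imports "HOL-Analysis.Analysis"
begin

definition ee :: "complex \<Rightarrow> complex" where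
  "ee x = exp (2 * of_real pi * \<i> * x)"

definition theta :: "nat \<Rightarrow> int \<Rightarrow> complex \<Rightarrow> complex \<Rightarrow> complex" where
  "theta d k tau z = (\<Sum>\<^sub>\<infinity> n::int.
      ee ((1/2) * (of_int n + of_int k / of_nat d)^2 * tau + (of_int n + of_int k / of_nat d) * z))"

definition lattice :: "nat \<Rightarrow> complex \<Rightarrow> complex set" where
  "lattice d tau = {of_int m * of_nat d + of_int n * tau | m n :: int. True}"

definition Sset :: "nat \<Rightarrow> (nat \<Rightarrow> nat) set" where
  "Sset g = PiE {1..g-1} (\<lambda>_. {0,1})"

definition cq :: "nat \<Rightarrow> (nat \<Rightarrow> nat \<Rightarrow> complex) \<Rightarrow> (nat \<Rightarrow> nat) \<Rightarrow> complex" where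
  "cq g T q = (\<Prod>(i,j)\<in>{(i,j). 1 \<le> i \<and> i < j \<and> j \<le> g-1}. ee (T i j) ^ (q i * q j))"

text \<open>F_k(z;u,v); tg = tau_g, T i j = tau_ij, t i = tau_{ig}\<close>
definition Fk :: "nat \<Rightarrow> nat \<Rightarrow> complex \<Rightarrow> (nat \<Rightarrow> nat \<Rightarrow> complex) \<Rightarrow> (nat \<Rightarrow> complex)
     \<Rightarrow> int \<Rightarrow> complex \<Rightarrow> (nat \<Rightarrow> complex) \<Rightarrow> (nat \<Rightarrow> complex) \<Rightarrow> complex" where
  "Fk g d tg T t k z u v = (\<Sum>q\<in>Sset g. cq g T q *
      theta d k tg (z + (\<Sum>i=1..g-1. of_nat (q i) * t i)) *
      (\<Prod>i=1..g-1. u i ^ q i * v i ^ (1 - q i)))"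

end

theory Submission
  imports Defs "HOL-Complex_Analysis.Complex_Analysis"
begin

lemma norm_ee: "norm (ee x) = exp (-2 * pi * Im x)"
  by (simp add: ee_def norm_exp_eq_Re)

lemma ee_add: "ee (a + b) = ee a * ee b"
  by (simp add: ee_def distrib_left exp_add)

lemma ee_nonzero: "ee x \<noteq> 0"
  by (simp add: ee_def)

lemma ee_int: "ee (of_int n) = 1"
  unfolding ee_def using exp_integer_2pi[of "real_of_int n"]
  by (simp add: mult.commute mult.left_commute)

lemma exp_abs_int_summable: "(\<lambda>M::int. exp (- real_of_int \<bar>M\<bar>)) summable_on UNIV"
proof -
  have g: "(\<lambda>n::nat. exp (- real n)) summable_on UNIV"
  proof -
    have "summable (\<lambda>n::nat. exp (-1::real) ^ n)" using summable_geometric[of "exp (-1::real)"] by simp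
    hence "summable (\<lambda>n::nat. exp (- real n))"
      by (simp add: exp_of_nat_mult[symmetric] exp_minus power_inverse
          flip: exp_of_nat_mult)
    thus ?thesis by (subst summable_on_UNIV_nonneg_real_iff) auto
  qed
  have A: "(\<lambda>M::int. exp (- real_of_int \<bar>M\<bar>)) summable_on (int ` UNIV)"
    using g by (subst summable_on_reindex) (auto simp: o_def inj_on_def)
  have B0: "(\<lambda>n::nat. exp (- real (Suc n))) summable_on UNIV"
  proof -
    have "(\<lambda>n::nat. exp (- real (Suc n))) summable_on (UNIV::nat set)"
      using g by (rule summable_on_comparison_test) auto
    thus ?thesis .
  qed
  have B: "(\<lambda>M::int. exp (- real_of_int \<bar>M\<bar>)) summable_on ((\<lambda>n. - int n - 1) ` UNIV)"
    using B0 by (subst summable_on_reindex) (auto simp: o_def inj_on_def)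
  have U: "UNIV = int ` UNIV \<union> (\<lambda>n. - int n - 1) ` UNIV"
  proof -
    { fix M :: int
      have "M \<in> int ` UNIV \<union> (\<lambda>n. - int n - 1) ` UNIV"
      proof (cases "M \<ge> 0")
        case True then show ?thesis by (auto intro: image_eqI[of _ _ "nat M"])
      next
        case False then show ?thesis
          by (intro UnI2 image_eqI[of _ _ "nat (- M - 1)"]) auto
      qed }
    thus ?thesis by auto
  qed
  show ?thesis
    by (subst U, rule summable_on_Un_disjoint[OF A B]) auto
qed

lemma gauss_real_summable:
  fixes a b :: real assumes a: "a > 0"
  shows "(\<lambda>M::int. exp (- a * of_int M ^ 2 + b * of_int \<bar>M\<bar>)) summable_on UNIV"
proof -
  define K where "K = (\<bar>b\<bar> + 1)^2 / (4*a)"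
  have le: "exp (- a * of_int M ^ 2 + b * of_int \<bar>M\<bar>) \<le> exp K * exp (- real_of_int \<bar>M\<bar>)" for M :: int
  proof -
    define x where "x = \<bar>real_of_int M\<bar>"
    have x0: "x \<ge> 0" by (simp add: x_def)
    have sq: "real_of_int M ^ 2 = x^2" by (simp add: x_def)
    have "b * x \<le> (\<bar>b\<bar>) * x" using x0 by (simp add: mult_right_mono)
    moreover have "(\<bar>b\<bar>+1) * x - a * x^2 \<le> K"
    proof -
      define c where "c = \<bar>b\<bar> + 1"
      have "0 \<le> (2*a*x - c)^2 / (4*a)" using a by simp
      also have "(2*a*x - c)^2 / (4*a) = (4*a*(a*x^2 - c*x) + c^2) / (4*a)"
        by (simp add: power2_eq_square algebra_simps)
      also have "\<dots> = (a*x^2 - c*x) + c^2/(4*a)"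
        using a by (simp add: add_divide_distrib)
      finally show ?thesis by (simp add: K_def c_def)
    qed
    ultimately have "- a * x^2 + b * x \<le> K + - x" by (simp add: algebra_simps)
    hence "- a * of_int M ^ 2 + b * of_int \<bar>M\<bar> \<le> K + - real_of_int \<bar>M\<bar>"
      by (simp add: x_def)
    thus ?thesis by (simp add: exp_add[symmetric])
  qed
  show ?thesis
    apply (rule summable_on_comparison_test[OF summable_on_cmult_right[OF exp_abs_int_summable, of "exp K"]])
    using le by auto
qed

lemma gauss_summable:
  fixes A B C :: complex assumes A: "Im A > 0"
  shows "(\<lambda>M::int. norm (ee (A * of_int M ^ 2 + B * of_int M + C))) summable_on UNIV"
proof -
  have "(\<lambda>M::int. exp (-2*pi*Im C) * exp (- (2*pi*Im A) * of_int M ^ 2 + (2*pi*\<bar>Im B\<bar>) * of_int \<bar>M\<bar>)) summable_on UNIV"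
    by (rule summable_on_cmult_right, rule gauss_real_summable) (use A in simp)
  moreover have "norm (ee (A * of_int M ^ 2 + B * of_int M + C)) \<le> exp (-2*pi*Im C) * exp (- (2*pi*Im A) * of_int M ^ 2 + (2*pi*\<bar>Im B\<bar>) * of_int \<bar>M\<bar>)" for M :: int
  proof -
    have "- (Im B * of_int M) \<le> \<bar>Im B\<bar> * of_int \<bar>M\<bar>"
      by (metis abs_ge_minus_self abs_mult of_int_abs)
    hence "pi * (- (Im B * of_int M)) \<le> pi * (\<bar>Im B\<bar> * of_int \<bar>M\<bar>)"
      by (intro mult_left_mono) auto
    hence "-2*pi*(Im A * of_int M ^ 2 + Im B * of_int M + Im C) \<le> -2*pi*Im C + (- (2*pi*Im A) * of_int M ^ 2 + (2*pi*\<bar>Im B\<bar>) * of_int \<bar>M\<bar>)"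
      by (simp add: algebra_simps)
    hence "exp (-2*pi*(Im A * of_int M ^ 2 + Im B * of_int M + Im C)) \<le> exp (-2*pi*Im C + (- (2*pi*Im A) * of_int M ^ 2 + (2*pi*\<bar>Im B\<bar>) * of_int \<bar>M\<bar>))"
      by simp
    moreover have "Im (A * of_int M ^ 2 + B * of_int M + C) = Im A * of_int M ^ 2 + Im B * of_int M + Im C"
      by (simp add: power2_eq_square)
    ultimately show ?thesis by (simp add: norm_ee flip: exp_add)
  qed
  ultimately show ?thesis
    by (rule summable_on_comparison_test) auto
qed

lemma gauss_summable':
  fixes A B C :: complex assumes A: "Im A > 0"
  shows "(\<lambda>M::int. ee (A * of_int M ^ 2 + B * of_int M + C)) summable_on UNIV"
  by (rule abs_summable_summable[OF gauss_summable[OF A]])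

lemma test_id:
  fixes \<alpha> \<beta> \<tau> z L D m r jj P :: complex
  assumes L: "L \<noteq> 0" "P \<noteq> 0" and D: "D \<noteq> 0" and hP: "P = L + 1"
  shows "((\<alpha> + L*m)^2/(2*D*L) + (\<beta> + jj - L*m)^2/(2*D) - (\<alpha>+\<beta>+jj)^2/(2*D*P))*\<tau>
     + ((\<alpha>+\<beta>+jj+P*r)^2*\<tau>/(2*D*P) + (\<alpha>+\<beta>+jj+P*r)*z/D)
   = ((\<alpha> + L*(m + r))^2*\<tau>/(2*D*L) + (\<alpha> + L*(m+r))*z/D)
     + ((\<beta> + (jj + r - L*m))^2*\<tau>/(2*D*1) + (\<beta> + (jj + r - L*m))*z/D)"
proof -
  have "(\<alpha> + L*m)^2/(2*D*L) + (\<beta> + jj - L*m)^2/(2*D) - (\<alpha>+\<beta>+jj)^2/(2*D*P) + (\<alpha>+\<beta>+jj+P*r)^2/(2*D*P)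
     = (\<alpha> + L*(m + r))^2/(2*D*L) + (\<beta> + (jj + r - L*m))^2/(2*D)"
  proof -
    have e1: "(\<alpha>+\<beta>+jj+P*r)^2/(2*D*P) - (\<alpha>+\<beta>+jj)^2/(2*D*P) = (\<alpha>+\<beta>+jj)*r/D + P*r^2/(2*D)"
      using L D by (simp add: field_simps power2_eq_square; simp add: algebra_simps)
    have e2: "(\<alpha> + L*(m + r))^2/(2*D*L) - (\<alpha> + L*m)^2/(2*D*L) = (\<alpha> + L*m)*r/D + L*r^2/(2*D)"
      using L D by (simp add: field_simps power2_eq_square; simp add: algebra_simps)
    have e3: "(\<beta> + (jj + r - L*m))^2/(2*D) - (\<beta> + jj - L*m)^2/(2*D) = (\<beta> + jj - L*m)*r/D + r^2/(2*D)"
      using L D by (simp add: field_simps power2_eq_square; simp add: algebra_simps)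
    have e4: "(\<alpha>+\<beta>+jj)*r/D + P*r^2/(2*D) = ((\<alpha> + L*m)*r/D + L*r^2/(2*D)) + ((\<beta> + jj - L*m)*r/D + r^2/(2*D))"
      using D hP by (simp add: field_simps; simp add: algebra_simps)
    show ?thesis using e1 e2 e3 e4 by (simp add: algebra_simps)
  qed
  hence "((\<alpha> + L*m)^2/(2*D*L) + (\<beta> + jj - L*m)^2/(2*D) - (\<alpha>+\<beta>+jj)^2/(2*D*P) + (\<alpha>+\<beta>+jj+P*r)^2/(2*D*P))*\<tau>
     = ((\<alpha> + L*(m + r))^2/(2*D*L) + (\<beta> + (jj + r - L*m))^2/(2*D))*\<tau>" by simp
  moreover have "(\<alpha>+\<beta>+jj+P*r)*z/D = (\<alpha> + L*(m+r))*z/D + (\<beta> + (jj + r - L*m))*z/D"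
    using hP D by (simp add: field_simps; simp add: algebra_simps)
  ultimately show ?thesis by (simp add: algebra_simps)
qed

lemma infsum_times:
  fixes f g :: "'a \<Rightarrow> complex"
  assumes f: "(\<lambda>x. norm (f x)) summable_on UNIV" and g: "(\<lambda>y. norm (g y)) summable_on UNIV"
  shows "(\<lambda>p. norm (f (fst p) * g (snd p))) summable_on UNIV"
    and "(\<Sum>\<^sub>\<infinity>p. f (fst p) * g (snd p)) = (\<Sum>\<^sub>\<infinity>x. f x) * (\<Sum>\<^sub>\<infinity>y. g y)"
proof -
  have A: "(\<lambda>p. norm (f (fst p) * g (snd p))) summable_on (Sigma UNIV (\<lambda>_. UNIV))"
  proof -
    have e: "(\<lambda>x. (\<Sum>\<^sub>\<infinity>y. norm (f x * g y))) = (\<lambda>x. norm (f x) * (\<Sum>\<^sub>\<infinity>y. norm (g y)))"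
      by (simp add: norm_mult infsum_cmult_right')
    have s: "(\<lambda>x. norm (f x) * (\<Sum>\<^sub>\<infinity>y. norm (g y))) summable_on UNIV"
      by (intro summable_on_cmult_left f)
    show ?thesis
      apply (subst Infinite_Sum.abs_summable_on_Sigma_iff)
      apply (intro conjI ballI)
      subgoal by (simp add: norm_mult summable_on_cmult_right g)
      subgoal using e s by (simp add: infsum_nonneg)
      done
  qed
  thus 1: "(\<lambda>p. norm (f (fst p) * g (snd p))) summable_on UNIV" by simp
  have S: "(\<lambda>p. f (fst p) * g (snd p)) summable_on (Sigma UNIV (\<lambda>_. UNIV))"
    using abs_summable_summable[OF A] .
  have "(\<Sum>\<^sub>\<infinity>p\<in>Sigma UNIV (\<lambda>_. UNIV). f (fst p) * g (snd p)) = (\<Sum>\<^sub>\<infinity>x. \<Sum>\<^sub>\<infinity>y. f (fst (x,y)) * g (snd (x,y)))"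
    using infsum_Sigma_banach[OF S] by simp
  also have "\<dots> = (\<Sum>\<^sub>\<infinity>x. f x * (\<Sum>\<^sub>\<infinity>y. g y))"
    by (simp add: infsum_cmult_right')
  also have "\<dots> = (\<Sum>\<^sub>\<infinity>x. f x) * (\<Sum>\<^sub>\<infinity>y. g y)"
    by (simp add: infsum_cmult_left')
  finally show "(\<Sum>\<^sub>\<infinity>p. f (fst p) * g (snd p)) = (\<Sum>\<^sub>\<infinity>x. f x) * (\<Sum>\<^sub>\<infinity>y. g y)" by simp
qed

definition Bterm :: "nat \<Rightarrow> complex \<Rightarrow> nat \<Rightarrow> complex \<Rightarrow> complex \<Rightarrow> int \<Rightarrow> complex" where
  "Bterm d \<tau> l \<alpha> z M = ee ((\<alpha> + of_nat l * of_int M)^2 * \<tau> / (2 * of_nat d * of_nat l)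
       + (\<alpha> + of_nat l * of_int M) * z / of_nat d)"

definition Bf :: "nat \<Rightarrow> complex \<Rightarrow> nat \<Rightarrow> complex \<Rightarrow> complex \<Rightarrow> complex" where
  "Bf d \<tau> l \<alpha> z = (\<Sum>\<^sub>\<infinity>M::int. Bterm d \<tau> l \<alpha> z M)"

lemma Bterm_gauss:
  assumes "d > 0" "l > 0"
  shows "Bterm d \<tau> l \<alpha> z M = ee ((of_nat l * \<tau> / (2 * of_nat d)) * of_int M ^ 2
     + (\<alpha> * \<tau> / of_nat d + of_nat l * z / of_nat d) * of_int M
     + (\<alpha>^2 * \<tau> / (2 * of_nat d * of_nat l) + \<alpha> * z / of_nat d))"
  unfolding Bterm_def using assms
  by (intro arg_cong[where f=ee]) (simp add: field_simps power2_eq_square; simp add: algebra_simps)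

lemma Bterm_summable:
  assumes "d > 0" "l > 0" "Im \<tau> > 0"
  shows "(\<lambda>M. norm (Bterm d \<tau> l \<alpha> z M)) summable_on UNIV"
proof -
  have "Im (of_nat l * \<tau> / (2 * of_nat d)) > 0" using assms by (simp add: Im_divide_of_nat)
  from gauss_summable[OF this] show ?thesis by (simp add: Bterm_gauss[OF assms(1,2)])
qed

lemma Bf_periodic:
  assumes "l > 0"
  shows "Bf d \<tau> l (\<alpha> + of_nat l) z = Bf d \<tau> l \<alpha> z"
  unfolding Bf_def
  by (rule infsum_reindex_bij_witness[of UNIV "\<lambda>M. M - 1" "\<lambda>M. M + 1"])
     (auto simp: Bterm_def algebra_simps)

definition cterm :: "nat \<Rightarrow> complex \<Rightarrow> nat \<Rightarrow> complex \<Rightarrow> complex \<Rightarrow> nat \<Rightarrow> int \<Rightarrow> complex" where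
  "cterm d \<tau> l \<alpha> \<beta> j M = ee (((\<alpha> + of_nat l * of_int M)^2/(2* of_nat d* of_nat l)
      + (\<beta> + of_nat j - of_nat l * of_int M)^2/(2* of_nat d)
      - (\<alpha>+\<beta>+ of_nat j)^2/(2* of_nat d* (of_nat l + 1)))*\<tau>)"

definition Ccoef :: "nat \<Rightarrow> complex \<Rightarrow> nat \<Rightarrow> complex \<Rightarrow> complex \<Rightarrow> nat \<Rightarrow> complex" where
  "Ccoef d \<tau> l \<alpha> \<beta> j = (\<Sum>\<^sub>\<infinity>M::int. cterm d \<tau> l \<alpha> \<beta> j M)"

lemma cterm_gauss:
  assumes "d > 0" "l > 0"
  shows "cterm d \<tau> l \<alpha> \<beta> j M = ee ((of_nat l * (of_nat l + 1) * \<tau> / (2 * of_nat d)) * of_int M ^ 2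
     + ((\<alpha> - (\<beta> + of_nat j) * of_nat l) * \<tau> / of_nat d) * of_int M
     + (\<alpha>^2/(2* of_nat d* of_nat l) + (\<beta> + of_nat j)^2/(2* of_nat d)
      - (\<alpha>+\<beta>+ of_nat j)^2/(2* of_nat d*(of_nat l + 1)))*\<tau>)"
proof -
  define L D m jj where "L = (of_nat l :: complex)" and "D = (of_nat d :: complex)"
    and "m = (of_int M :: complex)" and "jj = (of_nat j :: complex)"
  have L1: "L + 1 \<noteq> 0"
  proof -
    have "L + 1 = of_nat (Suc l)" by (simp add: L_def)
    thus ?thesis using of_nat_neq_0[of l] by (simp add: add.commute)
  qed
  have L: "L \<noteq> 0" "L + 1 \<noteq> 0" and D: "D \<noteq> 0" using assms L1 unfolding L_def D_def
    by simp_all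
  have "((\<alpha> + L * m)^2/(2*D*L) + (\<beta> + jj - L * m)^2/(2*D) - (\<alpha>+\<beta>+jj)^2/(2*D*(L+1)))*\<tau>
     = (L * (L + 1) * \<tau> / (2 * D)) * m ^ 2 + ((\<alpha> - (\<beta> + jj) * L) * \<tau> / D) * m
     + (\<alpha>^2/(2*D*L) + (\<beta> + jj)^2/(2*D) - (\<alpha>+\<beta>+jj)^2/(2*D*(L + 1)))*\<tau>"
  proof -
    have "(\<alpha> + L * m)^2/(2*D*L) = \<alpha>^2/(2*D*L) + \<alpha>*m/D + L*m^2/(2*D)"
      using L D by (simp add: field_simps power2_eq_square; simp add: algebra_simps)
    moreover have "(\<beta> + jj - L * m)^2/(2*D) = (\<beta> + jj)^2/(2*D) - (\<beta>+jj)*L*m/D + L*L*m^2/(2*D)"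
      using L D by (simp add: field_simps power2_eq_square; simp add: algebra_simps)
    ultimately show ?thesis using D by (simp add: field_simps power2_eq_square; simp add: algebra_simps)
  qed
  thus ?thesis unfolding cterm_def L_def D_def m_def jj_def by simp
qed

lemma cterm_summable:
  assumes "d > 0" "l > 0" "Im \<tau> > 0"
  shows "(\<lambda>M. norm (cterm d \<tau> l \<alpha> \<beta> j M)) summable_on UNIV"
proof -
  have pos: "Im (of_nat l * (of_nat l + 1) * \<tau> / (2 * of_nat d)) > 0" using assms
    by (simp add: Im_divide_of_nat)
  show ?thesis unfolding cterm_gauss[OF assms(1,2)] by (rule gauss_summable[OF pos])
qed

lemma divmod_helper:
  fixes j R n :: int assumes "0 \<le> j" "j < n"
  shows "(j + n * R) mod n = j" "(j + n * R) div n = R"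
  using assms by (simp_all add: mod_pos_pos_trivial div_pos_pos_trivial)

lemma Bf_mult_key:
  assumes d: "d > 0" and l: "l > 0"
  shows "cterm d \<tau> l \<alpha> \<beta> j M * Bterm d \<tau> (l+1) (\<alpha> + \<beta> + of_nat j) z R
       = Bterm d \<tau> l \<alpha> z (M + R) * Bterm d \<tau> 1 \<beta> z (int j + R - int l * M)"
proof -
  define L D m r jj where "L = (of_nat l :: complex)" and "D = (of_nat d :: complex)"
    and "m = (of_int M :: complex)" and "r = (of_int R :: complex)" and "jj = (of_nat j :: complex)"
  have L1: "L + 1 \<noteq> 0"
  proof -
    have "L + 1 = of_nat (Suc l)" by (simp add: L_def)
    thus ?thesis using of_nat_neq_0[of l] by (simp add: add.commute)
  qed
  have L: "L \<noteq> 0" and D: "D \<noteq> 0" using assms unfolding L_def D_def by simp_all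
  have e: "((\<alpha> + L*m)^2/(2*D*L) + (\<beta> + jj - L*m)^2/(2*D) - (\<alpha>+\<beta>+jj)^2/(2*D*(L+1)))*\<tau>
     + ((\<alpha>+\<beta>+jj+(L+1)*r)^2*\<tau>/(2*D*(L+1)) + (\<alpha>+\<beta>+jj+(L+1)*r)*z/D)
   = ((\<alpha> + L*(m + r))^2*\<tau>/(2*D*L) + (\<alpha> + L*(m+r))*z/D)
     + ((\<beta> + (jj + r - L*m))^2*\<tau>/(2*D*1) + (\<beta> + (jj + r - L*m))*z/D)"
    by (rule test_id[OF L L1 D]) simp
  have "cterm d \<tau> l \<alpha> \<beta> j M * Bterm d \<tau> (l+1) (\<alpha> + \<beta> + of_nat j) z R
     = ee (((\<alpha> + L*m)^2/(2*D*L) + (\<beta> + jj - L*m)^2/(2*D) - (\<alpha>+\<beta>+jj)^2/(2*D*(L+1)))*\<tau>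
     + ((\<alpha>+\<beta>+jj+(L+1)*r)^2*\<tau>/(2*D*(L+1)) + (\<alpha>+\<beta>+jj+(L+1)*r)*z/D))"
    unfolding cterm_def Bterm_def ee_add L_def D_def m_def r_def jj_def
    by (simp add: add.commute add.left_commute)
  also have "\<dots> = ee (((\<alpha> + L*(m + r))^2*\<tau>/(2*D*L) + (\<alpha> + L*(m+r))*z/D)
     + ((\<beta> + (jj + r - L*m))^2*\<tau>/(2*D*1) + (\<beta> + (jj + r - L*m))*z/D))"
    by (simp only: e)
  also have "\<dots> = Bterm d \<tau> l \<alpha> z (M + R) * Bterm d \<tau> 1 \<beta> z (int j + R - int l * M)"
    unfolding Bterm_def ee_add L_def D_def m_def r_def jj_def
    by simp
  finally show ?thesis .
qed

lemma Bf_mult: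
  assumes d: "d > 0" and l: "l > 0" and t: "Im \<tau> > 0"
  shows "Bf d \<tau> l \<alpha> z * Bf d \<tau> 1 \<beta> z
       = (\<Sum>j<l+1. Ccoef d \<tau> l \<alpha> \<beta> j * Bf d \<tau> (l+1) (\<alpha> + \<beta> + of_nat j) z)"
proof -
  define a where "a = Bterm d \<tau> l \<alpha> z"
  define b where "b = Bterm d \<tau> 1 \<beta> z"
  define F where "F = (\<lambda>(j::nat, R::int, M::int). cterm d \<tau> l \<alpha> \<beta> j M * Bterm d \<tau> (l+1) (\<alpha> + \<beta> + of_nat j) z R)"
  define fwd where "fwd = (\<lambda>(j::nat, R::int, M::int). (M + R, int j + R - int l * M))"
  define inv where "inv = (\<lambda>(M'::int, K'::int). (nat ((int l * M' + K') mod int (l+1)),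
      (int l * M' + K') div int (l+1), M' - (int l * M' + K') div int (l+1)))"
  define S where "S = Sigma {..<l+1} (\<lambda>_. (UNIV :: (int \<times> int) set))"
  define T where "T = (\<lambda>p::int\<times>int. a (fst p) * b (snd p))"
  have key: "T (fwd x) = F x" if "x \<in> S" for x
    using Bf_mult_key[OF d l] unfolding T_def F_def fwd_def a_def b_def
    by (auto split: prod.splits)
  have i1: "inv (fwd x) = x" if "x \<in> S" for x
  proof -
    obtain j R M where x: "x = (j, R, M)" by (cases x) auto
    have j: "j < l + 1" using that by (simp add: S_def x)
    have e: "int l * (M + R) + (int j + R - int l * M) = int j + int (l+1) * R"
      by (simp add: algebra_simps)
    have "(int j + int (l+1) * R) mod int (l+1) = int j" "(int j + int (l+1) * R) div int (l+1) = R"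
      using divmod_helper[of "int j" "int (l+1)" R] j by simp_all
    thus ?thesis unfolding x fwd_def inv_def by (simp only: prod.case e) simp
  qed
  have i2: "fwd x \<in> UNIV" for x by simp
  have i3: "fwd (inv y) = y" for y
  proof -
    obtain M' K' where y: "y = (M', K')" by (cases y) auto
    define Q where "Q = int l * M' + K'"
    have m0: "0 \<le> Q mod int (l+1)" by simp
    have dm: "Q div int (l+1) * int (l+1) + Q mod int (l+1) = Q" by (rule div_mult_mod_eq)
    show ?thesis unfolding y fwd_def inv_def Q_def[symmetric] using m0 dm
      by (simp add: Q_def algebra_simps)
  qed
  have i4: "inv y \<in> S" for y
  proof -
    obtain M' K' where y: "y = (M', K')" by (cases y) auto
    have "nat ((int l * M' + K') mod int (l+1)) < l+1"
      by (subst nat_less_iff) auto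
    thus ?thesis unfolding y inv_def S_def by (simp del: of_nat_add add: of_nat_add[symmetric])
  qed
  have sa: "(\<lambda>M. norm (a M)) summable_on UNIV" unfolding a_def by (rule Bterm_summable[OF d l t])
  have sb: "(\<lambda>M. norm (b M)) summable_on UNIV" unfolding b_def by (rule Bterm_summable[OF d _ t]) simp
  have LHS: "Bf d \<tau> l \<alpha> z * Bf d \<tau> 1 \<beta> z = (\<Sum>\<^sub>\<infinity>p. T p)"
    using infsum_times(2)[OF sa sb] by (simp add: Bf_def a_def b_def T_def)
  have sumT: "T summable_on UNIV"
    using abs_summable_summable[OF infsum_times(1)[OF sa sb]] by (simp add: T_def)
  have re: "infsum F S = infsum T UNIV"
    by (rule infsum_reindex_bij_witness[of S inv fwd UNIV T F]) (use i1 i3 i4 key in auto)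
  have sumF: "F summable_on S"
    using summable_on_reindex_bij_witness[of S inv fwd UNIV T F] i1 i3 i4 key sumT by auto
  have "infsum F S = (\<Sum>\<^sub>\<infinity>j\<in>{..<l+1}. \<Sum>\<^sub>\<infinity>q. F (j, q))"
    using infsum_Sigma_banach[OF sumF[unfolded S_def]] by (simp add: S_def)
  also have "\<dots> = (\<Sum>j<l+1. \<Sum>\<^sub>\<infinity>q. F (j, q))" by simp
  also have "\<dots> = (\<Sum>j<l+1. Ccoef d \<tau> l \<alpha> \<beta> j * Bf d \<tau> (l+1) (\<alpha> + \<beta> + of_nat j) z)"
  proof (rule sum.cong[OF refl])
    fix j assume "j \<in> {..<l+1}"
    have sc: "(\<lambda>M. norm (cterm d \<tau> l \<alpha> \<beta> j M)) summable_on UNIV" by (rule cterm_summable[OF d l t])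
    have sB: "(\<lambda>R. norm (Bterm d \<tau> (l+1) (\<alpha> + \<beta> + of_nat j) z R)) summable_on UNIV"
      by (rule Bterm_summable[OF d _ t]) simp
    have "(\<Sum>\<^sub>\<infinity>q. F (j, q)) = (\<Sum>\<^sub>\<infinity>q. Bterm d \<tau> (l+1) (\<alpha> + \<beta> + of_nat j) z (fst q) * cterm d \<tau> l \<alpha> \<beta> j (snd q))"
      by (rule infsum_cong) (auto simp: F_def split: prod.splits)
    also have "\<dots> = Bf d \<tau> (l+1) (\<alpha> + \<beta> + of_nat j) z * Ccoef d \<tau> l \<alpha> \<beta> j"
      using infsum_times(2)[OF sB sc] by (simp add: Bf_def Ccoef_def)
    finally show "(\<Sum>\<^sub>\<infinity>q. F (j, q)) = Ccoef d \<tau> l \<alpha> \<beta> j * Bf d \<tau> (l+1) (\<alpha> + \<beta> + of_nat j) z"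
      by simp
  qed
  finally show ?thesis using LHS re by simp
qed

lemma Bf_periodic_mult:
  assumes "l > 0"
  shows "Bf d \<tau> l (\<alpha> + of_nat l * of_nat k) z = Bf d \<tau> l \<alpha> z"
proof (induction k)
  case 0 then show ?case by simp
next
  case (Suc k)
  have "Bf d \<tau> l (\<alpha> + of_nat l * of_nat (Suc k)) z = Bf d \<tau> l ((\<alpha> + of_nat l * of_nat k) + of_nat l) z"
    by (simp add: algebra_simps)
  also have "\<dots> = Bf d \<tau> l (\<alpha> + of_nat l * of_nat k) z" by (rule Bf_periodic[OF assms])
  finally show ?case using Suc by simp
qed

lemma Bf_mod:
  assumes "l > 0"
  shows "Bf d \<tau> l (s + of_nat n) z = Bf d \<tau> l (s + of_nat (n mod l)) z"
proof -
  have "s + of_nat n = (s + of_nat (n mod l)) + of_nat l * of_nat (n div l)"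
  proof -
    have "n = n mod l + l * (n div l)" by simp
    hence "(of_nat n :: complex) = of_nat (n mod l) + of_nat l * of_nat (n div l)"
      by (metis of_nat_add of_nat_mult)
    thus ?thesis by (simp add: algebra_simps)
  qed
  thus ?thesis by (simp only:) (rule Bf_periodic_mult[OF assms])
qed

definition inspan :: "nat \<Rightarrow> complex \<Rightarrow> nat \<Rightarrow> complex \<Rightarrow> (complex \<Rightarrow> complex) \<Rightarrow> bool" where
  "inspan d \<tau> l s f \<longleftrightarrow> (\<exists>C. \<forall>z. f z = (\<Sum>j<l. C j * Bf d \<tau> l (s + of_nat j) z))"

lemma inspan_Bf:
  assumes "l > 0"
  shows "inspan d \<tau> l s (Bf d \<tau> l (s + of_nat n))"
  unfolding inspan_def
proof (intro exI allI)
  fix z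
  have m: "n mod l \<in> {..<l}" using assms by simp
  have "(\<Sum>j<l. (if j = n mod l then 1 else 0) * Bf d \<tau> l (s + of_nat j) z) = Bf d \<tau> l (s + of_nat (n mod l)) z"
  proof -
    have "(\<Sum>j<l. (if j = n mod l then 1 else 0) * Bf d \<tau> l (s + of_nat j) z)
        = (\<Sum>j<l. if j = n mod l then Bf d \<tau> l (s + of_nat j) z else 0)"
      by (rule sum.cong) auto
    also have "\<dots> = Bf d \<tau> l (s + of_nat (n mod l)) z" using m by (simp add: sum.delta')
    finally show ?thesis .
  qed
  thus "Bf d \<tau> l (s + of_nat n) z = (\<Sum>j<l. (if j = n mod l then 1 else 0) * Bf d \<tau> l (s + of_nat j) z)"
    using Bf_mod[OF assms] by simp
qed

lemma inspan_add:
  assumes "inspan d \<tau> l s f" "inspan d \<tau> l s g"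
  shows "inspan d \<tau> l s (\<lambda>z. f z + g z)"
proof -
  obtain C where C: "\<And>z. f z = (\<Sum>j<l. C j * Bf d \<tau> l (s + of_nat j) z)" using assms(1) unfolding inspan_def by blast
  obtain D where D: "\<And>z. g z = (\<Sum>j<l. D j * Bf d \<tau> l (s + of_nat j) z)" using assms(2) unfolding inspan_def by blast
  show ?thesis unfolding inspan_def
    by (rule exI[of _ "\<lambda>j. C j + D j"]) (simp add: C D distrib_right sum.distrib)
qed

lemma inspan_scale:
  assumes "inspan d \<tau> l s f"
  shows "inspan d \<tau> l s (\<lambda>z. c * f z)"
proof -
  obtain C where C: "\<And>z. f z = (\<Sum>j<l. C j * Bf d \<tau> l (s + of_nat j) z)" using assms(1) unfolding inspan_def by blast
  show ?thesis unfolding inspan_def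
    by (rule exI[of _ "\<lambda>j. c * C j"]) (simp add: C sum_distrib_left mult.assoc)
qed

lemma inspan_zero: "inspan d \<tau> l s (\<lambda>z. 0)"
  unfolding inspan_def by (rule exI[of _ "\<lambda>_. 0"]) simp

lemma inspan_sum:
  assumes "finite A" "\<And>i. i \<in> A \<Longrightarrow> inspan d \<tau> l s (f i)"
  shows "inspan d \<tau> l s (\<lambda>z. \<Sum>i\<in>A. f i z)"
  using assms
proof (induction A rule: finite_induct)
  case empty then show ?case by (simp add: inspan_zero)
next
  case (insert x F)
  then show ?case by (simp add: inspan_add)
qed

lemma inspan_mult:
  assumes d: "d > 0" and l: "l > 0" and t: "Im \<tau> > 0" and f: "inspan d \<tau> l s f"
  shows "inspan d \<tau> (l+1) (s + \<beta>) (\<lambda>z. f z * Bf d \<tau> 1 \<beta> z)"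
proof -
  obtain C where C: "\<And>z. f z = (\<Sum>j<l. C j * Bf d \<tau> l (s + of_nat j) z)" using f unfolding inspan_def by blast
  have "f z * Bf d \<tau> 1 \<beta> z = (\<Sum>j<l. \<Sum>i<l+1. C j * Ccoef d \<tau> l (s + of_nat j) \<beta> i * Bf d \<tau> (l+1) ((s + \<beta>) + of_nat (j + i)) z)" for z
  proof -
    have "f z * Bf d \<tau> 1 \<beta> z = (\<Sum>j<l. C j * (Bf d \<tau> l (s + of_nat j) z * Bf d \<tau> 1 \<beta> z))"
      by (simp add: C sum_distrib_right mult.assoc)
    also have "\<dots> = (\<Sum>j<l. C j * (\<Sum>i<l+1. Ccoef d \<tau> l (s + of_nat j) \<beta> i * Bf d \<tau> (l+1) (s + of_nat j + \<beta> + of_nat i) z))"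
      by (simp only: Bf_mult[OF d l t])
    also have "\<dots> = (\<Sum>j<l. \<Sum>i<l+1. C j * Ccoef d \<tau> l (s + of_nat j) \<beta> i * Bf d \<tau> (l+1) ((s + \<beta>) + of_nat (j + i)) z)"
      by (simp add: sum_distrib_left mult.assoc algebra_simps)
    finally show ?thesis .
  qed
  moreover have "inspan d \<tau> (l+1) (s + \<beta>) (\<lambda>z. \<Sum>j<l. \<Sum>i<l+1. C j * Ccoef d \<tau> l (s + of_nat j) \<beta> i * Bf d \<tau> (l+1) ((s + \<beta>) + of_nat (j + i)) z)"
    by (intro inspan_sum inspan_scale[where f = "Bf d \<tau> (l+1) ((s + \<beta>) + of_nat _)", simplified mult.assoc] inspan_Bf finite_lessThan) simp
  ultimately show ?thesis by simp
qed

lemma inspan_prod: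
  assumes d: "d > 0" and t: "Im \<tau> > 0" and fin: "finite I" and ne: "I \<noteq> {}"
  shows "inspan d \<tau> (card I) (\<Sum>i\<in>I. \<beta> i) (\<lambda>z. \<Prod>i\<in>I. Bf d \<tau> 1 (\<beta> i) z)"
  using fin ne
proof (induction I rule: finite_ne_induct)
  case (singleton x)
  show ?case using inspan_Bf[of 1 d \<tau> "\<beta> x" 0] by simp
next
  case (insert x F)
  have cF: "card F > 0" using insert.hyps by (simp add: card_gt_0_iff)
  have "inspan d \<tau> (card F + 1) ((\<Sum>i\<in>F. \<beta> i) + \<beta> x) (\<lambda>z. (\<Prod>i\<in>F. Bf d \<tau> 1 (\<beta> i) z) * Bf d \<tau> 1 (\<beta> x) z)"
    by (rule inspan_mult[OF d cF t insert.IH])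
  thus ?case using insert.hyps by (simp add: add.commute mult.commute)
qed

lemma theta_Bf:
  assumes "d > 0"
  shows "theta d k \<tau> z = Bf d \<tau> d (of_int k) z"
  unfolding theta_def Bf_def Bterm_def
proof (rule infsum_cong)
  fix n :: int
  have "(1/2) * (of_int n + of_int k / of_nat d)^2 * \<tau> + (of_int n + of_int k / of_nat d) * z
      = (of_int k + of_nat d * of_int n)^2 * \<tau> / (2 * of_nat d * of_nat d) + (of_int k + of_nat d * of_int n) * z / of_nat d"
    using assms by (simp add: field_simps power2_eq_square; simp add: algebra_simps)
  thus "ee ((1/2) * (of_int n + of_int k / of_nat d)^2 * \<tau> + (of_int n + of_int k / of_nat d) * z)
      = ee ((of_int k + of_nat d * of_int n)^2 * \<tau> / (2 * of_nat d * of_nat d) + (of_int k + of_nat d * of_int n) * z / of_nat d)"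
    by simp
qed

definition thterm :: "complex \<Rightarrow> complex \<Rightarrow> int \<Rightarrow> complex" where
  "thterm t u K = ee (of_int K ^ 2 * t / 2 + of_int K * u)"

definition thf :: "complex \<Rightarrow> complex \<Rightarrow> complex" where
  "thf t u = (\<Sum>\<^sub>\<infinity>K::int. thterm t u K)"

lemma thterm_gauss: "thterm t u K = ee ((t/2) * of_int K ^ 2 + u * of_int K + 0)"
  unfolding thterm_def by (simp add: algebra_simps)

lemma thterm_abs_summable:
  assumes "Im t > 0" shows "(\<lambda>K. norm (thterm t u K)) summable_on UNIV"
proof -
  have "Im (t/2) > 0" using assms by simp
  show ?thesis unfolding thterm_gauss by (rule gauss_summable[OF \<open>Im (t/2) > 0\<close>])
qed

lemma thterm_summable:
  assumes "Im t > 0" shows "(\<lambda>K. thterm t u K) summable_on UNIV"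
  by (rule abs_summable_summable[OF thterm_abs_summable[OF assms]])

lemma ee_plus_int: "ee (x + of_int n) = ee x"
  by (simp add: ee_add ee_int)

lemma ee_half: "ee (1/2) = -1"
  by (simp add: ee_def)

lemma thf_period1: "thf t (u + 1) = thf t u"
  unfolding thf_def
proof (rule infsum_cong)
  fix K :: int
  have "of_int K ^ 2 * t / 2 + of_int K * (u + 1) = (of_int K ^ 2 * t / 2 + of_int K * u) + of_int K"
    by (simp add: algebra_simps)
  thus "thterm t (u + 1) K = thterm t u K" unfolding thterm_def by (simp only: ee_plus_int)
qed

lemma thf_quasi:
  "thf t (u + t) = ee (- t/2 - u) * thf t u"
proof -
  have "thterm t (u + t) K = ee (- t/2 - u) * thterm t u (K + 1)" for K
  proof -
    have "of_int K ^ 2 * t / 2 + of_int K * (u + t) = (- t/2 - u) + (of_int (K+1) ^ 2 * t / 2 + of_int (K+1) * u)"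
      by (simp add: algebra_simps power2_eq_square add_divide_distrib)
    thus ?thesis unfolding thterm_def by (simp add: ee_add)
  qed
  hence "thf t (u + t) = (\<Sum>\<^sub>\<infinity>K. ee (- t/2 - u) * thterm t u (K + 1))"
    unfolding thf_def by (intro infsum_cong) auto
  also have "\<dots> = ee (- t/2 - u) * (\<Sum>\<^sub>\<infinity>K. thterm t u (K + 1))"
    by (rule infsum_cmult_right')
  also have "(\<Sum>\<^sub>\<infinity>K. thterm t u (K + 1)) = thf t u"
    unfolding thf_def
    by (rule infsum_reindex_bij_witness[of UNIV "\<lambda>K. K - 1" "\<lambda>K. K + 1"]) auto
  finally show ?thesis .
qed

lemma thf_zero: "thf t ((1 + t)/2) = 0"
proof -
  define w where "w = (1 + t)/2"
  have neg: "thterm t w (- 1 - K) = - thterm t w K" for K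
  proof -
    have "of_int (-1-K) ^ 2 * t / 2 + of_int (-1-K) * w = (of_int K ^ 2 * t / 2 + of_int K * w) + (1/2) + of_int (- K - 1)"
      by (simp add: w_def algebra_simps power2_eq_square add_divide_distrib diff_divide_distrib)
    hence "thterm t w (- 1 - K) = ee ((of_int K ^ 2 * t / 2 + of_int K * w) + (1/2))"
      unfolding thterm_def by (simp only: ee_plus_int)
    thus ?thesis unfolding thterm_def by (simp only: ee_add ee_half) simp
  qed
  have "thf t w = (\<Sum>\<^sub>\<infinity>K. thterm t w (- 1 - K))"
    unfolding thf_def
    by (rule infsum_reindex_bij_witness[of UNIV "\<lambda>K. - 1 - K" "\<lambda>K. - 1 - K"]) auto
  also have "\<dots> = (\<Sum>\<^sub>\<infinity>K. - thterm t w K)" by (simp only: neg)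
  also have "\<dots> = - thf t w" unfolding thf_def by (rule infsum_uminus)
  finally show ?thesis unfolding w_def[symmetric] by simp
qed

lemma thterm_holo: "(\<lambda>u. thterm t u K) holomorphic_on A"
  unfolding thterm_def ee_def by (intro holomorphic_intros)

lemma thterm_bound:
  assumes "u \<in> cball 0 R"
  shows "norm (thterm t u K) \<le> exp (- (pi * Im t) * of_int K ^ 2 + (2 * pi * R) * of_int \<bar>K\<bar>)"
proof -
  have "\<bar>Im u\<bar> \<le> R" using assms abs_Im_le_cmod[of u] by (simp add: dist_norm)
  have "- (Im u * of_int K) \<le> \<bar>Im u\<bar> * \<bar>of_int K\<bar>" by (metis abs_ge_minus_self abs_mult)
  also have "\<dots> \<le> R * \<bar>of_int K\<bar>" using \<open>\<bar>Im u\<bar> \<le> R\<close> by (intro mult_right_mono) auto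
  finally have "- (Im u * of_int K) \<le> R * of_int \<bar>K\<bar>" by simp
  hence "pi * (- (Im u * of_int K)) \<le> pi * (R * of_int \<bar>K\<bar>)" by (intro mult_left_mono) auto
  moreover have "Im (of_int K ^ 2 * t / 2 + of_int K * u) = of_int K ^ 2 * Im t / 2 + of_int K * Im u"
    by (simp add: power2_eq_square)
  ultimately show ?thesis unfolding thterm_def norm_ee by (simp add: algebra_simps)
qed

lemma thf_ulim:
  assumes t: "Im t > 0"
  shows "uniform_limit (cball 0 R) (\<lambda>X u. \<Sum>K\<in>X. thterm t u K) (thf t) (finite_subsets_at_top UNIV)"
proof -
  have "uniform_limit (cball 0 R) (\<lambda>X u. \<Sum>K\<in>X. thterm t u K) (\<lambda>u. \<Sum>\<^sub>\<infinity>K\<in>UNIV. thterm t u K) (finite_subsets_at_top UNIV)"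
    by (rule Weierstrass_m_test_general[OF thterm_bound gauss_real_summable]) (use t in auto)
  thus ?thesis unfolding thf_def by simp
qed

lemma thf_holo:
  assumes t: "Im t > 0"
  shows "thf t holomorphic_on UNIV"
proof -
  have hb: "thf t holomorphic_on ball 0 R" for R
  proof -
    have ev: "\<forall>\<^sub>F X in finite_subsets_at_top UNIV. continuous_on (cball 0 R) (\<lambda>u. \<Sum>K\<in>X. thterm t u K)
        \<and> (\<lambda>u. \<Sum>K\<in>X. thterm t u K) holomorphic_on ball 0 R"
      by (intro always_eventually allI conjI holomorphic_on_imp_continuous_on holomorphic_on_sum thterm_holo)
    show ?thesis
      by (rule holomorphic_uniform_limit[OF ev thf_ulim[OF t]]) auto
  qed
  show ?thesis unfolding holomorphic_on_def
  proof
    fix x :: complex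
    have "x \<in> ball 0 (norm x + 1)" by simp
    hence "thf t field_differentiable at x"
      using hb[of "norm x + 1"] holomorphic_on_imp_differentiable_at open_ball by blast
    thus "thf t field_differentiable at x within UNIV" by simp
  qed
qed

lemma thterm_integral:
  "contour_integral (linepath 0 1) (\<lambda>u. thterm t u K) = (if K = 0 then 1 else 0)"
proof (cases "K = 0")
  case True
  then show ?thesis by (simp add: thterm_def ee_def)
next
  case False
  define P where "P = (\<lambda>u. ee (of_int K ^ 2 * t / 2 + of_int K * u) / (2 * of_real pi * \<i> * of_int K))"
  have der: "(P has_field_derivative thterm t u K) (at u within UNIV)" for u
  proof -
    have "((\<lambda>u. exp (2 * of_real pi * \<i> * (of_int K ^ 2 * t / 2 + of_int K * u))) has_field_derivative
           exp (2 * of_real pi * \<i> * (of_int K ^ 2 * t / 2 + of_int K * u)) * (2 * of_real pi * \<i> * (0 + of_int K * 1))) (at u)"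
      by (intro derivative_eq_intros) auto
    hence "(P has_field_derivative exp (2 * of_real pi * \<i> * (of_int K ^ 2 * t / 2 + of_int K * u)) * (2 * of_real pi * \<i> * (0 + of_int K * 1)) / (2 * of_real pi * \<i> * of_int K)) (at u)"
      unfolding P_def ee_def by (rule DERIV_cdivide)
    thus ?thesis using False by (simp add: thterm_def ee_def)
  qed
  have "((\<lambda>u. thterm t u K) has_contour_integral (P (pathfinish (linepath 0 1)) - P (pathstart (linepath 0 1)))) (linepath 0 1)"
    by (rule contour_integral_primitive[OF der]) auto
  moreover have "P 1 = P 0"
  proof -
    have "ee (of_int K ^ 2 * t / 2 + of_int K * 1) = ee (of_int K ^ 2 * t / 2 + 0)"
      using ee_plus_int[of "of_int K ^ 2 * t / 2" K] by simp
    thus ?thesis unfolding P_def by simp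
  qed
  ultimately show ?thesis using False contour_integral_unique by fastforce
qed

lemma thf_integral:
  assumes t: "Im t > 0"
  shows "contour_integral (linepath 0 1) (thf t) = 1"
proof -
  define F where "F = finite_subsets_at_top (UNIV :: int set)"
  have ul: "uniform_limit (path_image (linepath 0 1)) (\<lambda>X u. \<Sum>K\<in>X. thterm t u K) (thf t) F"
    unfolding F_def
  proof (rule uniform_limit_on_subset[OF thf_ulim[OF t, of 1]])
    show "path_image (linepath 0 1) \<subseteq> cball (0::complex) 1"
      by (simp, intro closed_segment_subset) auto
  qed
  have ci: "\<forall>\<^sub>F X in F. (\<lambda>u. \<Sum>K\<in>X. thterm t u K) contour_integrable_on linepath 0 1"
    by (intro always_eventually allI contour_integrable_continuous_linepath
        holomorphic_on_imp_continuous_on holomorphic_on_sum thterm_holo)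
  have lim: "((\<lambda>X. contour_integral (linepath 0 1) (\<lambda>u. \<Sum>K\<in>X. thterm t u K)) \<longlongrightarrow> contour_integral (linepath 0 1) (thf t)) F"
    by (rule contour_integral_uniform_limit(2)[OF ci ul]) (auto simp: F_def)
  have ev: "\<forall>\<^sub>F X in F. contour_integral (linepath 0 1) (\<lambda>u. \<Sum>K\<in>X. thterm t u K) = 1"
    unfolding F_def eventually_finite_subsets_at_top
  proof (intro exI[of _ "{0}"] conjI allI impI)
    fix Y :: "int set" assume Y: "finite Y \<and> {0} \<subseteq> Y \<and> Y \<subseteq> UNIV"
    have "contour_integral (linepath 0 1) (\<lambda>u. \<Sum>K\<in>Y. thterm t u K) = (\<Sum>K\<in>Y. contour_integral (linepath 0 1) (\<lambda>u. thterm t u K))"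
      using Y by (intro contour_integral_sum contour_integrable_continuous_linepath
        holomorphic_on_imp_continuous_on thterm_holo) auto
    also have "\<dots> = (\<Sum>K\<in>Y. if K = 0 then 1 else 0)" by (simp add: thterm_integral)
    also have "\<dots> = 1" using Y by (simp add: sum.delta)
    finally show "contour_integral (linepath 0 1) (\<lambda>u. \<Sum>K\<in>Y. thterm t u K) = 1" .
  qed auto
  have "((\<lambda>X. contour_integral (linepath 0 1) (\<lambda>u. \<Sum>K\<in>X. thterm t u K)) \<longlongrightarrow> 1) F"
    using ev by (rule tendsto_eventually)
  with lim show ?thesis using tendsto_unique[of F] by (auto simp: F_def)
qed

lemma thf_not_zero:
  assumes t: "Im t > 0"
  shows "\<exists>u. thf t u \<noteq> 0"
proof (rule ccontr)
  assume "\<not> (\<exists>u. thf t u \<noteq> 0)"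
  hence "thf t = (\<lambda>_. 0)" by auto
  thus False using thf_integral[OF t] by simp
qed

lemma ci_translate:
  "contour_integral (linepath (a + w) (b + w)) G = contour_integral (linepath a b) (\<lambda>z. G (z + w))"
  by (metis contour_integral_translate linepath_translate)

lemma hseg_sub:
  assumes "Im a = y" "Im b = y"
  shows "closed_segment a b \<subseteq> {z. Im z = y}"
  using assms closed_segment_same_Im[of a b] by auto

lemma hseg_mem:
  assumes "Im a = Im c" "Im b = Im c" "Re a \<le> Re c" "Re c \<le> Re b"
  shows "c \<in> closed_segment a b"
  using assms closed_segment_same_Im[of a b] by (auto simp: closed_segment_eq_real_ivl)

locale hline =
  fixes G :: "complex \<Rightarrow> complex" and y :: real
  assumes cont: "continuous_on {z. Im z = y} G"
    and per: "\<And>z. Im z = y \<Longrightarrow> G (z + 1) = G z"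
begin

lemma contseg: "Im a = y \<Longrightarrow> Im b = y \<Longrightarrow> continuous_on (closed_segment a b) G"
  by (rule continuous_on_subset[OF cont hseg_sub])

lemma shift1:
  assumes ab: "Im a = y" "Im b = y"
  shows "contour_integral (linepath (a + 1) (b + 1)) G = contour_integral (linepath a b) G"
  unfolding ci_translate
proof (rule contour_integral_cong[OF refl])
  fix z assume "z \<in> path_image (linepath a b)"
  hence "z \<in> closed_segment a b" by simp
  note ab this
  hence "Im z = y" using hseg_sub[of a y b] by auto
  thus "G (z + 1) = G z" by (rule per)
qed

lemma shift_int: "Im x = y \<Longrightarrow>
    contour_integral (linepath (x + of_int n) (x + of_int n + 1)) G = contour_integral (linepath x (x + 1)) G"
proof (induction n rule: int_induct[where k=0])
  case base then show ?case by simp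
next
  case (step1 i)
  have "contour_integral (linepath (x + of_int (i + 1)) (x + of_int (i + 1) + 1)) G
     = contour_integral (linepath ((x + of_int i) + 1) ((x + of_int i + 1) + 1)) G" by (simp add: add.assoc)
  also have "\<dots> = contour_integral (linepath (x + of_int i) (x + of_int i + 1)) G"
    by (rule shift1) (use step1 in auto)
  finally show ?case using step1 by simp
next
  case (step2 i)
  have "contour_integral (linepath (x + of_int i) (x + of_int i + 1)) G
     = contour_integral (linepath ((x + of_int (i - 1)) + 1) ((x + of_int (i - 1) + 1) + 1)) G" by (simp add: algebra_simps)
  also have "\<dots> = contour_integral (linepath (x + of_int (i - 1)) (x + of_int (i - 1) + 1)) G"
    by (rule shift1) (use step2 in auto)
  finally show ?case using step2 by simp
qed

lemma shift_frac:
  assumes x: "Im x = y" and c: "0 \<le> c" "c \<le> 1"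
  shows "contour_integral (linepath (x + of_real c) (x + of_real c + 1)) G = contour_integral (linepath x (x + 1)) G"
proof -
  have "contour_integral (linepath (x + of_real c) (x + of_real c + 1)) G
     = contour_integral (linepath (x + of_real c) (x + 1)) G + contour_integral (linepath (x + 1) (x + of_real c + 1)) G"
    by (rule contour_integral_split_linepath[OF contseg hseg_mem]) (use x c in auto)
  also have "contour_integral (linepath (x + 1) (x + of_real c + 1)) G = contour_integral (linepath x (x + of_real c)) G"
    using shift1[of x "x + of_real c"] x by (simp add: add_ac)
  also have "contour_integral (linepath (x + of_real c) (x + 1)) G + contour_integral (linepath x (x + of_real c)) G
      = contour_integral (linepath x (x + 1)) G"
    using contour_integral_split_linepath[OF contseg hseg_mem, of x "x + 1" "x + of_real c"] x c by simp
  finally show ?thesis .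
qed

lemma shift_real:
  assumes x: "Im x = y"
  shows "contour_integral (linepath (x + of_real c) (x + of_real c + 1)) G = contour_integral (linepath x (x + 1)) G"
proof -
  define n where "n = \<lfloor>c\<rfloor>"
  define f where "f = c - of_int n"
  have f: "0 \<le> f" "f \<le> 1" unfolding f_def n_def by linarith+
  have "x + of_real c = (x + of_real f) + of_int n" by (simp add: f_def)
  hence "contour_integral (linepath (x + of_real c) (x + of_real c + 1)) G
      = contour_integral (linepath (x + of_real f) (x + of_real f + 1)) G"
    using shift_int[of "x + of_real f" n] x by (simp add: add.assoc)
  also have "\<dots> = contour_integral (linepath x (x + 1)) G" by (rule shift_frac[OF x f])
  finally show ?thesis .
qed

end

locale thctx =
  fixes t :: complex
  assumes t: "Im t > 0"
begin

abbreviation "f \<equiv> thf t"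

lemma holo: "f holomorphic_on UNIV" by (rule thf_holo[OF t])

lemma hasder: "(f has_field_derivative deriv f x) (at x)"
  using holomorphic_derivI[OF holo open_UNIV UNIV_I] by simp

lemma per_int: "f (u + of_int m) = f u"
proof (induction m arbitrary: u rule: int_induct[where k=0])
  case base then show ?case by simp
next
  case (step1 i)
  have "f (u + of_int (i + 1)) = f ((u + of_int i) + 1)" by (simp add: add.assoc)
  also have "\<dots> = f (u + of_int i)" by (rule thf_period1)
  finally show ?case using step1 by simp
next
  case (step2 i)
  have "f (u + of_int i) = f ((u + of_int (i - 1)) + 1)" by (simp add: algebra_simps)
  also have "\<dots> = f (u + of_int (i - 1))" by (rule thf_period1)
  finally show ?case using step2 by simp
qed

lemma quasi_zero: "f (u + t) = 0 \<longleftrightarrow> f u = 0"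
  using thf_quasi[of t u] ee_nonzero by simp

lemma quasi_int_zero: "f (u + of_int n * t) = 0 \<longleftrightarrow> f u = 0"
proof (induction n arbitrary: u rule: int_induct[where k=0])
  case base then show ?case by simp
next
  case (step1 i)
  have "f (u + of_int (i + 1) * t) = f ((u + of_int i * t) + t)" by (simp add: algebra_simps)
  thus ?case using quasi_zero step1 by simp
next
  case (step2 i)
  have e: "u + of_int i * t = (u + of_int (i - 1) * t) + t" by (simp add: algebra_simps)
  have "f (u + of_int i * t) = 0 \<longleftrightarrow> f (u + of_int (i-1) * t) = 0"
    unfolding e by (rule quasi_zero)
  thus ?case using step2.IH[of u] by blast
qed

lemma lattice_zero: "f (u + of_int m + of_int n * t) = 0 \<longleftrightarrow> f u = 0"
  using quasi_int_zero[of "u + of_int m" n] per_int[of u m] by simp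

lemma deriv_per: "deriv f (u + 1) = deriv f u"
proof -
  have "((\<lambda>x. f (x + 1)) has_field_derivative deriv f (u + 1)) (at u)"
    using hasder[of "u + 1"] by (simp add: DERIV_shift)
  moreover have "(\<lambda>x. f (x + 1)) = f" by (rule ext) (rule thf_period1)
  ultimately show ?thesis using hasder[of u] DERIV_unique by metis
qed

lemma deriv_quasi: "deriv f (u + t) = ee (- t/2 - u) * (deriv f u - 2 * of_real pi * \<i> * f u)"
proof -
  have "((\<lambda>x. f (x + t)) has_field_derivative deriv f (u + t)) (at u)"
    using hasder[of "u + t"] by (simp add: DERIV_shift)
  moreover have "(\<lambda>x. f (x + t)) = (\<lambda>x. ee (- t/2 - x) * f x)" by (rule ext) (rule thf_quasi)
  moreover have "((\<lambda>x. ee (- t/2 - x) * f x) has_field_derivative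
      ee (- t/2 - u) * (2 * of_real pi * \<i> * (0 - 1)) * f u + ee (- t/2 - u) * deriv f u) (at u)"
    unfolding ee_def by (intro derivative_eq_intros hasder[unfolded ee_def]) (auto simp: hasder)
  ultimately have "deriv f (u + t) = ee (- t/2 - u) * (2 * of_real pi * \<i> * (0 - 1)) * f u + ee (- t/2 - u) * deriv f u"
    using DERIV_unique by metis
  thus ?thesis by (simp add: algebra_simps)
qed

definition G where "G x = deriv f x * 1 / f x"

lemma G_per: "G (u + 1) = G u"
  unfolding G_def by (simp add: deriv_per thf_period1)

lemma G_quasi: "f u \<noteq> 0 \<Longrightarrow> G (u + t) = G u - 2 * of_real pi * \<i>"
  unfolding G_def deriv_quasi thf_quasi using ee_nonzero[of "- t/2 - u"]
  by (simp add: field_simps)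

lemma G_cont: "continuous_on A G" if "\<forall>z\<in>A. f z \<noteq> 0"
proof -
  have "deriv f holomorphic_on UNIV" by (rule holomorphic_deriv[OF holo open_UNIV])
  hence "continuous_on A (deriv f)" using holomorphic_on_imp_continuous_on holomorphic_on_subset by blast
  moreover have "continuous_on A f" using holo holomorphic_on_imp_continuous_on holomorphic_on_subset by blast
  ultimately show ?thesis unfolding G_def using that by (intro continuous_intros) auto
qed

end

context thctx
begin

lemma f_not_const: "\<not> f constant_on UNIV"
proof
  assume "f constant_on UNIV"
  then obtain c where c: "\<And>x. f x = c" unfolding constant_on_def by blast
  have "c = 0" using c[of "(1 + t)/2"] thf_zero[of t] by simp
  thus False using thf_not_zero[OF t] c by auto
qed

lemma box_count:
  fixes a y1 :: real
  assumes za: "\<And>u. f u = 0 \<Longrightarrow> Re u \<noteq> a" and zy: "\<And>u. f u = 0 \<Longrightarrow> Im u \<noteq> y1"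
  defines "a1 \<equiv> Complex a y1" and "a3 \<equiv> Complex (a + 1) (y1 + Im t)"
  shows "finite {p\<in>box a1 a3. f p = 0}" "(\<Sum>p\<in>{p\<in>box a1 a3. f p = 0}. zorder f p) = 1"
proof -
  define h where "h = Im t"
  have h: "h > 0" using t by (simp add: h_def)
  define a2 where "a2 = Complex (a + 1) y1"
  define a4 where "a4 = Complex a (y1 + h)"
  have za1: "Re u \<noteq> a + 1" if "f u = 0" for u
  proof
    assume "Re u = a + 1"
    moreover have "f (u + of_int (-1)) = 0" using per_int[of u "-1"] that by simp
    ultimately show False using za[of "u + of_int (-1)"] by simp
  qed
  have zy1: "Im u \<noteq> y1 + h" if "f u = 0" for u
  proof
    assume "Im u = y1 + h"
    moreover have "f (u + of_int (-1) * t) = 0" using quasi_int_zero[of u "-1"] that by simp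
    ultimately show False using zy[of "u + of_int (-1) * t"] by (simp add: h_def)
  qed
  define S where "S = box (a1 - (1 + \<i>)) (a3 + (1 + \<i>))"
  have cbS: "cbox a1 a3 \<subseteq> S"
    unfolding S_def by (auto simp: in_box_complex_iff in_cbox_complex_iff a1_def a3_def)
  have boxS: "box a1 a3 \<subseteq> S" using cbS box_subset_cbox by blast
  have le: "Re a1 \<le> Re a3" "Im a1 \<le> Im a3" using h by (simp_all add: a1_def a3_def h_def)
  define pz where "pz = {w\<in>S. f w = 0 \<or> w \<in> {}}"
  have fin: "finite pz"
  proof -
    have "finite {z\<in>cbox (a1 - (1 + \<i>)) (a3 + (1 + \<i>)). f z = 0}"
      by (rule holomorphic_compact_finite_zeros[OF holo open_UNIV connected_UNIV compact_cbox _ f_not_const]) simp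
    moreover have "pz \<subseteq> {z\<in>cbox (a1 - (1 + \<i>)) (a3 + (1 + \<i>)). f z = 0}"
      unfolding pz_def S_def using box_subset_cbox by auto
    ultimately show ?thesis using finite_subset by blast
  qed
  have bdry: "f z \<noteq> 0" if "z \<in> path_image (rectpath a1 a3)" for z
  proof
    assume fz: "f z = 0"
    from that have "z \<in> cbox a1 a3 - box a1 a3" using path_image_rectpath_cbox_minus_box[OF le] by simp
    hence "Re z = a \<or> Re z = a + 1 \<or> Im z = y1 \<or> Im z = y1 + h"
      by (auto simp: in_box_complex_iff in_cbox_complex_iff a1_def a3_def h_def)
    thus False using za[OF fz] za1[OF fz] zy[OF fz] zy1[OF fz] by blast
  qed
  have AP: "contour_integral (rectpath a1 a3) (\<lambda>x. deriv f x * (\<lambda>_. 1) x / f x) =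
          2 * pi * \<i> * (\<Sum>p\<in>pz. winding_number (rectpath a1 a3) p * (\<lambda>_. 1) p * zorder f p)"
    unfolding pz_def
  proof (rule argument_principle)
    show "open S" unfolding S_def by (rule open_box)
    show "connected S" unfolding S_def by (simp add: convex_connected)
    show "f holomorphic_on S - {}" using holo holomorphic_on_subset by blast
    show "(\<lambda>_. 1) holomorphic_on S" by simp
    show "path_image (rectpath a1 a3) \<subseteq> S - {w\<in>S. f w = 0 \<or> w \<in> {}}"
      using bdry path_image_rectpath_subset_cbox[OF le] cbS by blast
    show "\<forall>z. z \<notin> S \<longrightarrow> winding_number (rectpath a1 a3) z = 0"
      using winding_number_rectpath_outside[OF le] cbS by blast
    show "finite {w\<in>S. f w = 0 \<or> w \<in> {}}" using fin unfolding pz_def .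
  qed auto
  have Gint: "(\<lambda>x. deriv f x * (\<lambda>_. 1) x / f x) = G" by (simp add: G_def fun_eq_iff)
  have PI: "path_image (rectpath a1 a3) = closed_segment a1 a2 \<union> closed_segment a2 a3 \<union> closed_segment a3 a4 \<union> closed_segment a4 a1"
    by (simp add: rectpath_def Let_def path_image_join a2_def a4_def a1_def a3_def h_def Un_assoc)
  have ci: "G contour_integrable_on linepath u v" if "closed_segment u v \<subseteq> path_image (rectpath a1 a3)" for u v
    by (rule contour_integrable_continuous_linepath, rule G_cont) (use that bdry in blast)
  have c12: "G contour_integrable_on linepath a1 a2" using ci[of a1 a2] PI by blast
  have c23: "G contour_integrable_on linepath a2 a3" using ci[of a2 a3] PI by blast
  have c34: "G contour_integrable_on linepath a3 a4" using ci[of a3 a4] PI by blast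
  have c41: "G contour_integrable_on linepath a4 a1" using ci[of a4 a1] PI by blast
  have split: "contour_integral (rectpath a1 a3) G = contour_integral (linepath a1 a2) G + contour_integral (linepath a2 a3) G
      + contour_integral (linepath a3 a4) G + contour_integral (linepath a4 a1) G"
  proof -
    have r: "rectpath a1 a3 = linepath a1 a2 +++ linepath a2 a3 +++ linepath a3 a4 +++ linepath a4 a1"
      by (simp add: rectpath_def Let_def a2_def a4_def a1_def a3_def h_def)
    show ?thesis unfolding r using c12 c23 c34 c41
      by (simp add: contour_integrable_joinI add.assoc)
  qed
  have ya1: "Im a1 = y1" by (simp add: a1_def)
  interpret hl: hline G y1
  proof
    show "continuous_on {z. Im z = y1} G" by (rule G_cont) (use zy in blast)
    show "G (z + 1) = G z" for z by (rule G_per)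
  qed
  have I2: "contour_integral (linepath a2 a3) G = contour_integral (linepath a1 a4) G"
  proof -
    have "a2 = a1 + 1" "a3 = a4 + 1" by (simp_all add: a1_def a2_def a3_def a4_def h_def complex_eq_iff)
    hence "contour_integral (linepath a2 a3) G = contour_integral (linepath a1 a4) (\<lambda>z. G (z + 1))"
      by (simp add: ci_translate)
    also have "(\<lambda>z. G (z + 1)) = G" by (rule ext) (rule G_per)
    finally show ?thesis .
  qed
  have I4: "contour_integral (linepath a4 a1) G = - contour_integral (linepath a1 a4) G"
    using contour_integral_reversepath[of "linepath a1 a4" G] by simp
  define p where "p = a1 + of_real (- Re t)"
  have yp: "Im p = y1" by (simp add: p_def a1_def)
  have I3: "contour_integral (linepath a3 a4) G = 2 * of_real pi * \<i> - contour_integral (linepath p (p + 1)) G"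
  proof -
    have e: "a4 = p + t" "a3 = p + 1 + t"
      by (simp_all add: p_def a1_def a3_def a4_def h_def complex_eq_iff)
    have "contour_integral (linepath a4 a3) G = contour_integral (linepath p (p + 1)) (\<lambda>z. G (z + t))"
      unfolding e by (simp add: ci_translate)
    also have "\<dots> = contour_integral (linepath p (p + 1)) (\<lambda>z. G z - 2 * of_real pi * \<i>)"
    proof (rule contour_integral_cong[OF refl])
      fix z assume "z \<in> path_image (linepath p (p + 1))"
      hence "Im z = y1" using hseg_sub[of p y1 "p + 1"] yp by auto
      hence "f z \<noteq> 0" using zy by blast
      thus "G (z + t) = G z - 2 * of_real pi * \<i>" by (rule G_quasi)
    qed
    also have "\<dots> = contour_integral (linepath p (p + 1)) G - 2 * of_real pi * \<i>"
    proof -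
      have "G contour_integrable_on linepath p (p + 1)"
        by (rule contour_integrable_continuous_linepath, rule hl.contseg) (use yp in auto)
      thus ?thesis by (subst contour_integral_diff) auto
    qed
    finally have "contour_integral (linepath a4 a3) G = contour_integral (linepath p (p + 1)) G - 2 * of_real pi * \<i>" .
    moreover have "contour_integral (linepath a3 a4) G = - contour_integral (linepath a4 a3) G"
      using contour_integral_reversepath[of "linepath a4 a3" G] by simp
    ultimately show ?thesis by simp
  qed
  have I1: "contour_integral (linepath a1 a2) G = contour_integral (linepath p (p + 1)) G"
  proof -
    have "a2 = a1 + 1" by (simp add: a1_def a2_def complex_eq_iff)
    thus ?thesis using hl.shift_real[OF ya1, of "- Re t"] by (simp add: p_def)
  qed
  have LHS: "contour_integral (rectpath a1 a3) G = 2 * of_real pi * \<i>"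
    using split I1 I2 I3 I4 by simp
  define B where "B = {p\<in>box a1 a3. f p = 0}"
  have Bpz: "B = pz \<inter> box a1 a3" unfolding B_def pz_def using boxS by auto
  show finB: "finite {p\<in>box a1 a3. f p = 0}" using fin Bpz B_def by simp
  have wind: "winding_number (rectpath a1 a3) q * (\<lambda>_. 1) q * of_int (zorder f q)
      = (if q \<in> box a1 a3 then of_int (zorder f q) else 0)" if "q \<in> pz" for q
  proof (cases "q \<in> box a1 a3")
    case True
    then show ?thesis using winding_number_rectpath by simp
  next
    case False
    have "f q = 0" using that by (simp add: pz_def)
    hence "q \<notin> path_image (rectpath a1 a3)" using bdry by blast
    hence "q \<notin> cbox a1 a3" using False path_image_rectpath_cbox_minus_box[OF le] by blast
    then show ?thesis using winding_number_rectpath_outside[OF le] False by simp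
  qed
  have "(\<Sum>q\<in>pz. winding_number (rectpath a1 a3) q * (\<lambda>_. 1) q * of_int (zorder f q))
      = (\<Sum>q\<in>pz. if q \<in> box a1 a3 then of_int (zorder f q) else 0)"
    by (rule sum.cong[OF refl]) (rule wind)
  also have "\<dots> = (\<Sum>q\<in>pz \<inter> box a1 a3. of_int (zorder f q))"
    using fin by (simp add: sum.inter_restrict[symmetric] Int_commute)
  also have "\<dots> = of_int (\<Sum>q\<in>B. zorder f q)" by (simp add: Bpz)
  finally have RHS: "(\<Sum>q\<in>pz. winding_number (rectpath a1 a3) q * (\<lambda>_. 1) q * of_int (zorder f q)) = of_int (\<Sum>q\<in>B. zorder f q)" .
  from AP[unfolded Gint] LHS RHS have "2 * of_real pi * \<i> = 2 * pi * \<i> * (of_int (\<Sum>q\<in>B. zorder f q) :: complex)"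
    by simp
  hence "(of_int (\<Sum>q\<in>B. zorder f q) :: complex) = 1" by simp
  thus "(\<Sum>p\<in>{p\<in>box a1 a3. f p = 0}. zorder f p) = 1" unfolding B_def by (metis of_int_eq_1_iff)
qed

lemma zorder_pos: assumes "f p = 0" shows "zorder f p > 0"
proof -
  obtain b where b: "f b \<noteq> 0" using thf_not_zero[OF t] by blast
  have "\<forall>\<^sub>F w in at p. f w \<noteq> 0 \<and> w \<in> UNIV"
    by (rule non_zero_neighbour_alt[OF holo open_UNIV connected_UNIV UNIV_I UNIV_I b])
  hence "\<exists>\<^sub>F w in at p. f w \<noteq> 0" by (intro eventually_frequently) (auto elim: eventually_mono)
  thus ?thesis using zorder_pos_iff[OF holo open_UNIV UNIV_I] assms by blast
qed

lemma avoid_countable: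
  fixes C :: "real set" assumes "countable C" shows "\<exists>x. x \<notin> C"
  using assms uncountable_UNIV_real by (metis UNIV_eq_I)

lemma zeros_lattice:
  assumes u0: "f u0 = 0"
  shows "\<exists>m n::int. u0 = (1 + t)/2 + of_int m + of_int n * t"
proof (rule ccontr)
  assume nl: "\<not> ?thesis"
  define \<omega> where "\<omega> = (1 + t)/2"
  have w0: "f \<omega> = 0" unfolding \<omega>_def by (rule thf_zero)
  define h where "h = Im t"
  have h: "h > 0" using t by (simp add: h_def)
  have cZ: "countable {z\<in>UNIV. f z = 0}"
    by (rule holomorphic_countable_zeros[OF holo open_UNIV connected_UNIV fsigma_UNIV f_not_const])
  obtain a where a: "a \<notin> Re ` {z\<in>UNIV. f z = 0}" using avoid_countable[OF countable_image[OF cZ]] by blast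
  obtain y1 where y1: "y1 \<notin> Im ` {z\<in>UNIV. f z = 0}" using avoid_countable[OF countable_image[OF cZ]] by blast
  have za: "\<And>u. f u = 0 \<Longrightarrow> Re u \<noteq> a" using a by auto
  have zy: "\<And>u. f u = 0 \<Longrightarrow> Im u \<noteq> y1" using y1 by auto
  define a1 where "a1 = Complex a y1"
  define a3 where "a3 = Complex (a + 1) (y1 + Im t)"
  define B where "B = {p\<in>box a1 a3. f p = 0}"
  have finB: "finite B" and sumB: "(\<Sum>p\<in>B. zorder f p) = 1"
    using box_count[OF za zy] unfolding B_def a1_def a3_def by auto
  have rep: "\<exists>m n::int. w - of_int m - of_int n * t \<in> B" if fw: "f w = 0" for w
  proof -
    define n where "n = \<lfloor>(Im w - y1) / h\<rfloor>"
    have n1: "of_int n * h \<le> Im w - y1" using h floor_divide_lower[OF h, of "Im w - y1"] by (simp add: n_def)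
    have n2: "Im w - y1 < of_int n * h + h" using h floor_divide_upper[OF h, of "Im w - y1"] by (simp add: n_def algebra_simps)
    define w1 where "w1 = w - of_int n * t"
    have f1: "f w1 = 0" using quasi_int_zero[of w1 n] fw by (simp add: w1_def)
    have iw1: "Im w1 = Im w - of_int n * h" by (simp add: w1_def h_def)
    define m where "m = \<lfloor>Re w1 - a\<rfloor>"
    have m1: "of_int m \<le> Re w1 - a" "Re w1 - a < of_int m + 1" unfolding m_def by linarith+
    define w2 where "w2 = w1 - of_int m"
    have f2: "f w2 = 0" using per_int[of w2 m] f1 by (simp add: w2_def)
    have "Re w2 \<noteq> a" "Im w2 \<noteq> y1" using za[OF f2] zy[OF f2] by auto
    moreover have "Re w2 = Re w1 - of_int m" "Im w2 = Im w1" by (simp_all add: w2_def)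
    ultimately have "w2 \<in> box a1 a3" using m1 n1 n2 iw1
      by (auto simp: in_box_complex_iff a1_def a3_def h_def[symmetric])
    thus ?thesis using f2 unfolding B_def w2_def w1_def by (intro exI[of _ m] exI[of _ n]) (auto simp: algebra_simps)
  qed
  obtain m1 n1 where r1: "\<omega> - of_int m1 - of_int n1 * t \<in> B" using rep[OF w0] by blast
  obtain m2 n2 where r2: "u0 - of_int m2 - of_int n2 * t \<in> B" using rep[OF u0] by blast
  have ne: "\<omega> - of_int m1 - of_int n1 * t \<noteq> u0 - of_int m2 - of_int n2 * t"
  proof
    assume "\<omega> - of_int m1 - of_int n1 * t = u0 - of_int m2 - of_int n2 * t"
    hence "u0 = \<omega> + of_int (m2 - m1) + of_int (n2 - n1) * t" by (simp add: algebra_simps)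
    thus False using nl unfolding \<omega>_def by blast
  qed
  have pos: "zorder f p \<ge> 1" if "p \<in> B" for p using zorder_pos[of p] that by (simp add: B_def)
  have "(\<Sum>p\<in>{\<omega> - of_int m1 - of_int n1 * t, u0 - of_int m2 - of_int n2 * t}. zorder f p) \<le> (\<Sum>p\<in>B. zorder f p)"
    by (rule sum_mono2[OF finB]) (use r1 r2 pos in force)+
  moreover have "(\<Sum>p\<in>{\<omega> - of_int m1 - of_int n1 * t, u0 - of_int m2 - of_int n2 * t}. zorder f p) \<ge> 2"
    using ne pos[OF r1] pos[OF r2] by simp
  ultimately show False using sumB by simp
qed

end

lemma B1_thf:
  assumes d: "d > 0"
  shows "Bf d \<tau> 1 \<beta> z = ee (\<beta>^2 * \<tau> / (2 * of_nat d) + \<beta> * z / of_nat d) * thf (\<tau> / of_nat d) (z / of_nat d + \<beta> * \<tau> / of_nat d)"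
proof -
  have "Bterm d \<tau> 1 \<beta> z K = ee (\<beta>^2 * \<tau> / (2 * of_nat d) + \<beta> * z / of_nat d) * thterm (\<tau> / of_nat d) (z / of_nat d + \<beta> * \<tau> / of_nat d) K" for K
  proof -
    have "(\<beta> + of_nat 1 * of_int K)^2 * \<tau> / (2 * of_nat d * of_nat 1) + (\<beta> + of_nat 1 * of_int K) * z / of_nat d
        = (\<beta>^2 * \<tau> / (2 * of_nat d) + \<beta> * z / of_nat d) + (of_int K ^ 2 * (\<tau> / of_nat d) / 2 + of_int K * (z / of_nat d + \<beta> * \<tau> / of_nat d))"
      using d by (simp add: field_simps power2_eq_square; simp add: algebra_simps)
    thus ?thesis unfolding Bterm_def thterm_def by (simp only: ee_add)
  qed
  hence "Bf d \<tau> 1 \<beta> z = (\<Sum>\<^sub>\<infinity>K. ee (\<beta>^2 * \<tau> / (2 * of_nat d) + \<beta> * z / of_nat d) * thterm (\<tau> / of_nat d) (z / of_nat d + \<beta> * \<tau> / of_nat d) K)"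
    unfolding Bf_def by (intro infsum_cong) auto
  also have "\<dots> = ee (\<beta>^2 * \<tau> / (2 * of_nat d) + \<beta> * z / of_nat d) * thf (\<tau> / of_nat d) (z / of_nat d + \<beta> * \<tau> / of_nat d)"
    unfolding thf_def by (rule infsum_cmult_right')
  finally show ?thesis .
qed

lemma B1_zero_iff:
  assumes d: "d > 0"
  shows "Bf d \<tau> 1 \<beta> z = 0 \<longleftrightarrow> thf (\<tau> / of_nat d) (z / of_nat d + \<beta> * \<tau> / of_nat d) = 0"
  using B1_thf[OF d] ee_nonzero by simp

lemma B1_vanish:
  assumes d: "d > 0" and e: "P + \<beta> * \<tau> = (of_nat d + \<tau>) / 2"
  shows "Bf d \<tau> 1 \<beta> P = 0"
proof -
  have "P / of_nat d + \<beta> * \<tau> / of_nat d = (1 + \<tau> / of_nat d) / 2"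
  proof -
    have "P / of_nat d + \<beta> * \<tau> / of_nat d = (P + \<beta> * \<tau>) / of_nat d" by (simp add: add_divide_distrib)
    also have "\<dots> = (1 + \<tau> / of_nat d) / 2" unfolding e using d by (simp add: field_simps)
    finally show ?thesis .
  qed
  hence "thf (\<tau> / of_nat d) (P / of_nat d + \<beta> * \<tau> / of_nat d) = 0"
    by (simp only:) (rule thf_zero)
  thus ?thesis using B1_zero_iff[OF d] by blast
qed

lemma B1_zero_lattice:
  assumes d: "d > 0" and t: "Im \<tau> > 0" and z: "Bf d \<tau> 1 \<beta> Q = 0"
  shows "\<exists>m n::int. Q + \<beta> * \<tau> = (of_nat d + \<tau>) / 2 + of_int m * of_nat d + of_int n * \<tau>"
proof -
  have t': "Im (\<tau> / of_nat d) > 0" using t d by (simp add: Im_divide_of_nat)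
  interpret thctx "\<tau> / of_nat d" by unfold_locales (rule t')
  have "thf (\<tau> / of_nat d) (Q / of_nat d + \<beta> * \<tau> / of_nat d) = 0" using z B1_zero_iff[OF d] by simp
  then obtain m n where mn: "Q / of_nat d + \<beta> * \<tau> / of_nat d = (1 + \<tau> / of_nat d)/2 + of_int m + of_int n * (\<tau> / of_nat d)"
    using zeros_lattice by blast
  have "Q + \<beta> * \<tau> = (Q / of_nat d + \<beta> * \<tau> / of_nat d) * of_nat d" using d by (simp add: field_simps)
  also have "\<dots> = (of_nat d + \<tau>) / 2 + of_int m * of_nat d + of_int n * \<tau>"
    unfolding mn using d by (simp add: field_simps)
  finally show ?thesis by blast
qed

lemma avoid_countable_complex:
  fixes C :: "complex set" assumes "countable C" shows "\<exists>x::real. of_real x \<notin> C"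
proof -
  have "countable (Re ` C)" using assms by simp
  then obtain x where "x \<notin> Re ` C" using uncountable_UNIV_real by (metis UNIV_eq_I)
  thus ?thesis by (intro exI[of _ x]) (metis Re_complex_of_real image_eqI)
qed

lemma indep_eval:
  fixes P lam :: "'a \<Rightarrow> complex" and A :: "'a set"
  assumes d: "d > 0" and cA: "card A < d" and t: "Im \<tau> > 0" and fin: "finite A" and q0: "q0 \<in> A"
    and dist: "\<And>q q'. q \<in> A \<Longrightarrow> q' \<in> A \<Longrightarrow> q \<noteq> q' \<Longrightarrow> P q - P q' \<notin> lattice d \<tau>"
    and zero: "\<And>k. k < d \<Longrightarrow> (\<Sum>q\<in>A. lam q * theta d (int k) \<tau> (P q)) = 0"
  shows "lam q0 = 0"
proof -
  have tn: "\<tau> \<noteq> 0" using t by auto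
  define A' where "A' = A - {q0}"
  define E where "E = d + 1 - card A"
  have E2: "E \<ge> 2" using cA by (simp add: E_def)
  define bq where "bq q = ((of_nat d + \<tau>)/2 - P q) / \<tau>" for q
  define c where "c = (\<Sum>q\<in>A'. bq q)"
  define Q where "Q = P q0"
  define X where "X = (\<lambda>(m::int, n::int). (of_nat d + \<tau>) / 2 + of_int m * of_nat d + of_int n * \<tau>)"
  define Bad1 where "Bad1 = (\<lambda>mn. (X mn - Q) / \<tau>) ` UNIV"
  define Bad2 where "Bad2 = (\<lambda>mn. (Q - c * \<tau> - X mn) / (of_nat (E - 1) * \<tau>)) ` UNIV"
  have "countable (Bad1 \<union> Bad2)" unfolding Bad1_def Bad2_def by simp
  then obtain x where x: "of_real x \<notin> Bad1 \<union> Bad2" using avoid_countable_complex by blast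
  define \<gamma> where "\<gamma> = (of_real x :: complex)"
  define \<beta> where "\<beta> = (\<lambda>i. case i of Inl q \<Rightarrow> bq q | Inr 0 \<Rightarrow> - c - of_nat (E - 1) * \<gamma> | Inr (Suc j) \<Rightarrow> \<gamma>)"
  define I where "I = Inl ` A' \<union> Inr ` {..<E}"
  have finI: "finite I" using fin by (simp add: I_def A'_def)
  have cardI: "card I = d"
  proof -
    have "card I = card (Inl ` A' :: ('a + nat) set) + card (Inr ` {..<E} :: ('a + nat) set)"
      unfolding I_def by (rule card_Un_disjoint) (use fin in \<open>auto simp: A'_def\<close>)
    also have "\<dots> = card A' + E" by (simp add: card_image)
    also have "card A' = card A - 1" using q0 fin by (simp add: A'_def)
    finally show ?thesis using q0 fin cA card_gt_0_iff[of A] by (auto simp: E_def)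
  qed
  have sumI: "(\<Sum>i\<in>I. \<beta> i) = 0"
  proof -
    have "(\<Sum>i\<in>I. \<beta> i) = (\<Sum>i\<in>Inl ` A'. \<beta> i) + (\<Sum>i\<in>Inr ` {..<E}. \<beta> i)"
      unfolding I_def by (rule sum.union_disjoint) (use fin in \<open>auto simp: A'_def\<close>)
    also have "(\<Sum>i\<in>Inl ` A'. \<beta> i) = c" by (simp add: sum.reindex c_def \<beta>_def)
    also have "(\<Sum>i\<in>Inr ` {..<E}. \<beta> i) = (\<Sum>j<E. \<beta> (Inr j))" by (simp add: sum.reindex)
    also have "\<dots> = (\<Sum>j<Suc (E - 1). \<beta> (Inr j))" using E2 by (simp add: Suc_diff_1[symmetric])
    also have "\<dots> = \<beta> (Inr 0) + (\<Sum>j<E - 1. \<beta> (Inr (Suc j)))" by (rule sum.lessThan_Suc_shift)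
    also have "\<dots> = - c - of_nat (E - 1) * \<gamma> + of_nat (E - 1) * \<gamma>" by (simp add: \<beta>_def)
    finally show ?thesis by simp
  qed
  define F where "F z = (\<Prod>i\<in>I. Bf d \<tau> 1 (\<beta> i) z)" for z
  have "inspan d \<tau> (card I) (\<Sum>i\<in>I. \<beta> i) F"
    unfolding F_def by (rule inspan_prod[OF d t finI]) (use E2 in \<open>auto simp: I_def lessThan_empty_iff\<close>)
  then obtain C where C: "\<And>z. F z = (\<Sum>j<d. C j * Bf d \<tau> d (0 + of_nat j) z)"
    unfolding inspan_def cardI sumI by blast
  have Fth: "F z = (\<Sum>j<d. C j * theta d (int j) \<tau> z)" for z
    unfolding C using theta_Bf[OF d] by simp
  have "(\<Sum>q\<in>A. lam q * F (P q)) = (\<Sum>j<d. C j * (\<Sum>q\<in>A. lam q * theta d (int j) \<tau> (P q)))"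
    unfolding Fth by (simp add: sum_distrib_left sum_distrib_right sum.swap[of _ A] mult_ac)
  also have "\<dots> = 0" using zero by simp
  finally have S0: "(\<Sum>q\<in>A. lam q * F (P q)) = 0" .
  have Fq: "F (P q) = 0" if "q \<in> A'" for q
  proof -
    have "Bf d \<tau> 1 (\<beta> (Inl q)) (P q) = 0"
      by (rule B1_vanish[OF d]) (use tn in \<open>simp add: \<beta>_def bq_def\<close>)
    moreover have "Inl q \<in> I" using that by (simp add: I_def)
    ultimately show ?thesis unfolding F_def using finI prod_zero_iff by blast
  qed
  have "(\<Sum>q\<in>A. lam q * F (P q)) = lam q0 * F (P q0) + (\<Sum>q\<in>A'. lam q * F (P q))"
    unfolding A'_def by (rule sum.remove[OF fin q0])
  also have "(\<Sum>q\<in>A'. lam q * F (P q)) = 0" using Fq by simp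
  finally have L0: "lam q0 * F Q = 0" using S0 by (simp add: Q_def)
  have FQ: "F Q \<noteq> 0"
  proof -
    have "Bf d \<tau> 1 (\<beta> i) Q \<noteq> 0" if "i \<in> I" for i
    proof
      assume z: "Bf d \<tau> 1 (\<beta> i) Q = 0"
      obtain m n where mn: "Q + \<beta> i * \<tau> = X (m, n)"
        using B1_zero_lattice[OF d t z] by (auto simp: X_def)
      show False
      proof (cases i)
        case (Inl q)
        hence q: "q \<in> A" "q \<noteq> q0" using that by (auto simp: I_def A'_def)
        have h1: "P q + bq q * \<tau> = (of_nat d + \<tau>) / 2" using tn by (simp add: bq_def)
        have mn': "Q + bq q * \<tau> = (of_nat d + \<tau>) / 2 + of_int m * of_nat d + of_int n * \<tau>"
          using mn Inl by (simp add: \<beta>_def X_def)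
        have "Q - P q = (Q + bq q * \<tau>) - (P q + bq q * \<tau>)" by simp
        also have "\<dots> = ((of_nat d + \<tau>) / 2 + of_int m * of_nat d + of_int n * \<tau>) - (of_nat d + \<tau>) / 2"
          by (simp only: mn' h1)
        finally have "Q - P q = of_int m * of_nat d + of_int n * \<tau>" by simp
        hence "P q0 - P q \<in> lattice d \<tau>" unfolding lattice_def Q_def by blast
        thus False using dist[OF q0 q(1)] q(2) by metis
      next
        case (Inr j)
        show False
        proof (cases j)
          case 0
          have H: "X (m, n) = Q + (- c - of_nat (E - 1) * \<gamma>) * \<tau>" using mn Inr 0 by (simp add: \<beta>_def)
          have e0: "of_nat (E - 1) * \<tau> \<noteq> 0" using tn E2 by simp
          have "Q - c * \<tau> - X (m, n) = \<gamma> * (of_nat (E - 1) * \<tau>)" unfolding H by (simp add: algebra_simps)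
          hence "\<gamma> = (Q - c * \<tau> - X (m, n)) / (of_nat (E - 1) * \<tau>)"
            using e0 by (simp add: nonzero_eq_divide_eq)
          hence "\<gamma> \<in> Bad2" unfolding Bad2_def by (rule image_eqI[where x="(m,n)"]) simp_all
          thus False using x by (simp add: \<gamma>_def)
        next
          case (Suc j')
          have "Q + \<gamma> * \<tau> = X (m, n)" using mn Inr Suc by (simp add: \<beta>_def)
          hence "\<gamma> = (X (m, n) - Q) / \<tau>" using tn by (simp add: field_simps)
          hence "\<gamma> \<in> Bad1" unfolding Bad1_def by (rule image_eqI[where x="(m,n)"]) simp_all
          thus False using x by (simp add: \<gamma>_def)
        qed
      qed
    qed
    thus ?thesis unfolding F_def using finI by (simp add: prod_zero_iff)
  qed
  show ?thesis using L0 FQ by simp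
qed

theorem proposition5p2:
  fixes g d :: nat and tg :: complex and T :: "nat \<Rightarrow> nat \<Rightarrow> complex" and t :: "nat \<Rightarrow> complex"
  assumes "g \<ge> 2" and "d \<ge> 1" and "d > 2 ^ (g - 1)"
    and "Im tg > 0"
    and "\<forall>i j. T i j = T j i"
    and "\<forall>n :: nat \<Rightarrow> int. (\<Sum>i=1..g-1. of_int (n i) * t i) \<in> lattice d tg
             \<longrightarrow> (\<forall>i\<in>{1..g-1}. n i = 0)"
  shows "\<not> (\<exists>z u v. (\<forall>i\<in>{1..g-1}. (u i, v i) \<noteq> (0, 0)) \<and>
                     (\<forall>k\<in>{0..<int d}. Fk g d tg T t k z u v = 0))"
proof
  assume "\<exists>z u v. (\<forall>i\<in>{1..g-1}. (u i, v i) \<noteq> (0, 0)) \<and>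
                     (\<forall>k\<in>{0..<int d}. Fk g d tg T t k z u v = 0)"
  then obtain z u v where uv: "\<And>i. i \<in> {1..g-1} \<Longrightarrow> (u i, v i) \<noteq> (0, 0)"
    and F0: "\<And>k. k \<in> {0..<int d} \<Longrightarrow> Fk g d tg T t k z u v = 0" by blast
  have d0: "d > 0" using assms(2) by simp
  define A where "A = Sset g"
  define P where "P q = z + (\<Sum>i=1..g-1. of_nat (q i) * t i)" for q :: "nat \<Rightarrow> nat"
  define lam where "lam q = cq g T q * (\<Prod>i=1..g-1. u i ^ q i * v i ^ (1 - q i))" for q :: "nat \<Rightarrow> nat"
  have fin: "finite A" unfolding A_def Sset_def by (intro finite_PiE) auto
  have cardA: "card A = 2 ^ (g - 1)"
    unfolding A_def Sset_def by (simp add: card_PiE numeral_2_eq_2)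
  have cA: "card A < d" using assms(3) cardA by simp
  define q0 where "q0 = restrict (\<lambda>i. if u i \<noteq> 0 then 1 else 0 :: nat) {1..g-1}"
  have q0A: "q0 \<in> A" unfolding q0_def A_def Sset_def by auto
  have dist: "P q - P q' \<notin> lattice d tg" if q: "q \<in> A" "q' \<in> A" "q \<noteq> q'" for q q'
  proof
    assume L: "P q - P q' \<in> lattice d tg"
    define n where "n i = int (q i) - int (q' i)" for i
    have "P q - P q' = (\<Sum>i=1..g-1. of_int (n i) * t i)"
      unfolding P_def n_def by (simp add: sum_subtractf[symmetric] algebra_simps)
    hence "\<forall>i\<in>{1..g-1}. n i = 0" using assms(6) L by metis
    hence "\<forall>i\<in>{1..g-1}. q i = q' i" by (simp add: n_def)
    hence "q = q'" using q unfolding A_def Sset_def by (intro PiE_ext) auto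
    thus False using q by simp
  qed
  have zero: "(\<Sum>q\<in>A. lam q * theta d (int k) tg (P q)) = 0" if "k < d" for k
  proof -
    have "Fk g d tg T t (int k) z u v = 0" using F0 that by simp
    thus ?thesis unfolding Fk_def A_def lam_def P_def by (simp add: mult_ac)
  qed
  have "lam q0 = 0"
    by (rule indep_eval[OF d0 cA assms(4) fin q0A dist zero]) auto
  moreover have "lam q0 \<noteq> 0"
  proof -
    have c0: "cq g T q0 \<noteq> 0"
    proof (cases "finite {(i,j). 1 \<le> i \<and> i < j \<and> j \<le> g-1}")
      case True
      then show ?thesis unfolding cq_def using ee_nonzero by (simp add: prod_zero_iff case_prod_beta)
    next
      case False
      then show ?thesis unfolding cq_def by simp
    qed
    have "u i ^ q0 i * v i ^ (1 - q0 i) \<noteq> 0" if "i \<in> {1..g-1}" for i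
      using uv[OF that] that by (cases "u i = 0") (auto simp: q0_def)
    hence "(\<Prod>i=1..g-1. u i ^ q0 i * v i ^ (1 - q0 i)) \<noteq> 0" by (simp add: prod_zero_iff)
    thus ?thesis using c0 by (simp add: lam_def)
  qed
  ultimately show False by simp
qed

end
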